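(* Let $n\ge1$, let $\varrho:[0,1]\to[0,\infty)$ be integrable with $\int_0^1\varrho(x)\,dx=1$, and let the angles $\theta_w$ and $\theta=\theta_\emptyset$ be as defined in the context. Define $\mathsf{U}_1:=\mathsf{I}_{2^{n-1}}\otimes\mathsf{R}(\theta)$ and, for $2\le j\le n$, \[ \mathsf{U}_j:=\prod_{w\in\{0,1\}^{j-1}}\Bigl(\mathsf{I}_{2^{n-j}}\otimes \mathsf{CC}^{(1)}_w\bigl(\mathsf{R}(\theta_w)\bigr)\Bigr), \] and let $|\psi_j\rangle:=\mathsf{U}_j\mathsf{U}_{j-1}\cdots\mathsf{U}_1|0\rangle^{\otimes n}$. Then for every $1\le j\le n$, \[ |\psi_j\rangle=|0\rangle^{\otimes(n-j)}\otimes\sum_{w=z_{n-j+1}\cdots z_n\in\{0,1\}^j}\Bigl(\mathsf{T}_{z_{n-j+1}}(\theta_{z_{n-j+2}\cdots z_n})\cdots\mathsf{T}_{z_{n-1}}(\theta_{z_n})\,\mathsf{T}_{z_n}(\theta)\Bigr)|w\rangle . \] In particular, $|\psi_n\rangle=\sum_{z_1\cdots z_n\in\{0,1\}^n}\bigl(\mathsf{T}_{z_1}(\theta_{z_2\cdots z_n})\cdots\mathsf{T}_{z_n}(\theta)\bigr)|z_1\cdots z_n\rangle$.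
   Context: The $n$-qubit space is $(\mathbb{C}^2)^{\otimes n}$ with basis $|z_1\cdots z_n\rangle=|z_1\rangle\otimes\cdots\otimes|z_n\rangle$ (qubit $1$ leftmost). $\mathsf{R}(\alpha)=\begin{pmatrix}\cos\alpha&-\sin\alpha\\ \sin\alpha&\cos\alpha\end{pmatrix}$, and $\mathsf{I}_d$ is the $d\times d$ identity. For $w\in\{0,1\}^{j-1}$, $\mathsf{CC}^{(1)}_w(U)\in\mathrm{U}(2^j)$ is the unitary on $j$ qubits that applies the one-qubit unitary $U$ to the first of these $j$ qubits if the remaining $j-1$ qubits are in the basis state $|w\rangle$, and acts as the identity on all other computational basis states; thus $\mathsf{I}_{2^{n-j}}\otimes\mathsf{CC}^{(1)}_w(U)$ acts on qubit $n-j+1$ controlled by qubits $n-j+2,\dots,n$. For a word $w=z_1\cdots z_m\in\{0,1\}^m$ ($m\ge0$) let $k(w)=\sum_{r=1}^m z_r2^{r-1}$, $I_w=[k(w)/2^m,(k(w)+1)/2^m]$, $p_w=\int_{I_w}\varrho(x)\,dx$; $0w,1w$ denote prepending a bit. For words $w$ of length $0\le m\le n-1$, $\theta_w\in[0,\pi/2]$ is defined by $\cos^2\theta_w=p_{0w}/p_w$, $\sin^2\theta_w=p_{1w}/p_w$ if $p_w>0$, and $\theta_w:=0$ if $p_w=0$; $\theta:=\theta_\emptyset$. For $z\in\{0,1\}$, $\mathsf{T}_z(x):=(\cos x)^{1-z}(\sin x)^z$. *)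

theory Defs
  imports "HOL-Analysis.Henstock_Kurzweil_Integration" "Jordan_Normal_Form.Matrix"
begin

section \<open>Linear-algebra infrastructure (complex matrices/vectors)\<close>

text \<open>Kronecker product of matrices and of vectors (standard convention:
the left factor is the most significant one).\<close>
definition kron :: "complex mat \<Rightarrow> complex mat \<Rightarrow> complex mat" where
  "kron A B = mat (dim_row A * dim_row B) (dim_col A * dim_col B)
     (\<lambda>(i, j). A $$ (i div dim_row B, j div dim_col B) * B $$ (i mod dim_row B, j mod dim_col B))"

definition kron_vec :: "complex vec \<Rightarrow> complex vec \<Rightarrow> complex vec" where
  "kron_vec u v = vec (dim_vec u * dim_vec v) (\<lambda>i. u $ (i div dim_vec v) * v $ (i mod dim_vec v))"

text \<open>One-qubit basis ket |z>, z = False ~ 0, z = True ~ 1.\<close>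
definition ket1 :: "bool \<Rightarrow> complex vec" where
  "ket1 b = vec 2 (\<lambda>i. if i = of_bool b then 1 else 0)"

text \<open>|z_1 ... z_m> = |z_1> (x) ... (x) |z_m> (qubit 1 leftmost).\<close>
fun ket :: "bool list \<Rightarrow> complex vec" where
  "ket [] = vec 1 (\<lambda>_. 1)"
| "ket (b # w) = kron_vec (ket1 b) (ket w)"

text \<open>Outer product |u><v|.\<close>
definition outer :: "complex vec \<Rightarrow> complex vec \<Rightarrow> complex mat" where
  "outer u v = mat (dim_vec u) (dim_vec v) (\<lambda>(i, j). u $ i * cnj (v $ j))"

text \<open>Finite sum of vectors of dimension d, indexed by a set.\<close>
definition vec_sum :: "nat \<Rightarrow> ('a \<Rightarrow> complex vec) \<Rightarrow> 'a set \<Rightarrow> complex vec" where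
  "vec_sum d f A = vec d (\<lambda>i. \<Sum>a\<in>A. f a $ i)"

text \<open>Rotation R(alpha).\<close>
definition Rot :: "real \<Rightarrow> complex mat" where
  "Rot \<alpha> = mat 2 2 (\<lambda>(i, j).
     if i = 0 \<and> j = 0 then complex_of_real (cos \<alpha>)
     else if i = 0 \<and> j = 1 then complex_of_real (- sin \<alpha>)
     else if i = 1 \<and> j = 0 then complex_of_real (sin \<alpha>)
     else complex_of_real (cos \<alpha>))"

text \<open>CC^(1)_w(U) on j = |w|+1 qubits: applies U to the first qubit if the
remaining |w| qubits are in |w>, identity on all other basis states.\<close>
definition CC1 :: "bool list \<Rightarrow> complex mat \<Rightarrow> complex mat" where
  "CC1 w U = kron U (outer (ket w) (ket w))
           + kron (1\<^sub>m 2) (1\<^sub>m (2 ^ length w) - outer (ket w) (ket w))"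

section \<open>Words, probabilities and angles\<close>

text \<open>k(w) = sum_r z_r 2^(r-1) for w = z_1 ... z_m (list index r-1).\<close>
definition kw :: "bool list \<Rightarrow> nat" where
  "kw w = (\<Sum>r<length w. of_bool (w ! r) * 2 ^ r)"

definition Iw :: "bool list \<Rightarrow> real set" where
  "Iw w = {real (kw w) / 2 ^ length w .. (real (kw w) + 1) / 2 ^ length w}"

definition pw :: "(real \<Rightarrow> real) \<Rightarrow> bool list \<Rightarrow> real" where
  "pw \<rho> w = integral (Iw w) \<rho>"

definition theta :: "(real \<Rightarrow> real) \<Rightarrow> bool list \<Rightarrow> real" where
  "theta \<rho> w = (if pw \<rho> w > 0 then
      (THE t. 0 \<le> t \<and> t \<le> pi / 2 \<and> (cos t)\<^sup>2 = pw \<rho> (False # w) / pw \<rho> w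
                \<and> (sin t)\<^sup>2 = pw \<rho> (True # w) / pw \<rho> w)
    else 0)"

definition T :: "bool \<Rightarrow> real \<Rightarrow> real" where
  "T z x = (cos x) ^ (1 - of_bool z) * (sin x) ^ (of_bool z)"

section \<open>The circuit\<close>

text \<open>U_1 = I_{2^(n-1)} (x) R(theta); for 2 <= j <= n,
U_j = product over w in {0,1}^(j-1) of I_{2^(n-j)} (x) CC^(1)_w(R(theta_w)).
The factors commute; we multiply them in the order of List.n_lists.\<close>
definition Ugate :: "(real \<Rightarrow> real) \<Rightarrow> nat \<Rightarrow> nat \<Rightarrow> complex mat" where
  "Ugate \<rho> n j = (if j = 1 then kron (1\<^sub>m (2 ^ (n - 1))) (Rot (theta \<rho> []))
     else foldr (\<lambda>w M. kron (1\<^sub>m (2 ^ (n - j))) (CC1 w (Rot (theta \<rho> w))) * M)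
                (List.n_lists (j - 1) [False, True]) (1\<^sub>m (2 ^ n)))"

text \<open>psi_j = U_j U_{j-1} ... U_1 |0>^(x)n.\<close>
fun psi :: "(real \<Rightarrow> real) \<Rightarrow> nat \<Rightarrow> nat \<Rightarrow> complex vec" where
  "psi \<rho> n 0 = ket (replicate n False)"
| "psi \<rho> n (Suc j) = mult_mat_vec (Ugate \<rho> n (Suc j)) (psi \<rho> n j)"

text \<open>Amplitude T_{y_1}(theta_{y_2...y_j}) ... T_{y_{j-1}}(theta_{y_j}) T_{y_j}(theta)
for w = y_1 ... y_j.\<close>
definition amp :: "(real \<Rightarrow> real) \<Rightarrow> bool list \<Rightarrow> real" where
  "amp \<rho> w = (\<Prod>i<length w. T (w ! i) (theta \<rho> (drop (Suc i) w)))"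

end

theory Submission
  imports Defs
begin


fun idx :: "bool list \<Rightarrow> nat" where
  "idx [] = 0"
| "idx (b # w) = of_bool b * 2 ^ length w + idx w"

fun bits :: "nat \<Rightarrow> nat \<Rightarrow> bool list" where
  "bits 0 i = []"
| "bits (Suc m) i = (i div 2 ^ m mod 2 = 1) # bits m (i mod 2 ^ m)"

lemma idx_less: "idx w < 2 ^ length w"
  by (induction w) (auto simp: of_bool_def)

lemma length_bits[simp]: "length (bits m i) = m"
  by (induction m arbitrary: i) auto

lemma idx_bits: "i < 2 ^ m \<Longrightarrow> idx (bits m i) = i"
proof (induction m arbitrary: i)
  case 0 then show ?case by simp
next
  case (Suc m)
  have d: "i div 2 ^ m < 2" using Suc.prems by (simp add: less_mult_imp_div_less mult.commute)
  have e: "i div 2 ^ m * 2 ^ m + i mod 2 ^ m = i" by (rule div_mult_mod_eq)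
  have ih: "idx (bits m (i mod 2 ^ m)) = i mod 2 ^ m" by (rule Suc.IH) simp
  consider (z) "i div 2 ^ m = 0" | (o) "i div 2 ^ m = 1" using d by linarith
  then show ?case
  proof cases
    case z
    then have "i div 2 ^ m * 2 ^ m = 0" by simp
    then have "i mod 2 ^ m = i" using e by linarith
    then show ?thesis using z ih by simp
  next
    case o
    then have "i div 2 ^ m * 2 ^ m = 2 ^ m" by simp
    then have "2 ^ m + i mod 2 ^ m = i" using e by linarith
    then show ?thesis using o ih by simp
  qed
qed

lemma bits_idx: "bits (length w) (idx w) = w"
proof (induction w)
  case Nil then show ?case by simp
next
  case (Cons b w)
  have l: "idx w < 2 ^ length w" by (rule idx_less)
  have d: "(of_bool b * 2 ^ length w + idx w) div 2 ^ length w = of_bool b"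
    using l by simp
  have m: "(of_bool b * 2 ^ length w + idx w) mod 2 ^ length w = idx w"
    using l by simp
  show ?case using d m Cons by simp
qed

lemma idx_inj: "length v = length w \<Longrightarrow> idx v = idx w \<Longrightarrow> v = w"
  by (metis bits_idx)

lemma dim_ket[simp]: "dim_vec (ket w) = 2 ^ length w"
  by (induction w) (auto simp: kron_vec_def ket1_def)

lemma split_eq: "(l::nat) < K \<Longrightarrow> (i = c * K + l) \<longleftrightarrow> (i div K = c \<and> i mod K = l)"
proof
  assume "l < K" "i = c * K + l" then show "i div K = c \<and> i mod K = l" by simp
next
  assume "i div K = c \<and> i mod K = l"
  then show "i = c * K + l" using div_mult_mod_eq[of i K] by simp
qed

lemma ket_index: "i < 2 ^ length w \<Longrightarrow> ket w $ i = (if i = idx w then 1 else 0)"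
proof (induction w arbitrary: i)
  case Nil then show ?case by simp
next
  case (Cons b w)
  have l: "idx w < 2 ^ length w" by (rule idx_less)
  have d: "i div 2 ^ length w < 2" using Cons.prems by (simp add: less_mult_imp_div_less mult.commute)
  have "ket (b # w) $ i = ket1 b $ (i div 2 ^ length w) * ket w $ (i mod 2 ^ length w)"
    using Cons.prems by (simp add: kron_vec_def ket1_def)
  also have "\<dots> = (if i div 2 ^ length w = of_bool b \<and> i mod 2 ^ length w = idx w then 1 else 0)"
    using d Cons.IH[of "i mod 2 ^ length w"] by (simp add: ket1_def)
  also have "\<dots> = (if i = idx (b # w) then 1 else 0)"
    using split_eq[OF l, of i "of_bool b"] by simp
  finally show ?case .
qed

lemma amp_Cons: "amp \<rho> (b # w) = T b (theta \<rho> w) * amp \<rho> w"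
  unfolding amp_def by (simp add: prod.lessThan_Suc_shift del: prod.lessThan_Suc)



lemma kron_carrier: "kron A B \<in> carrier_mat (dim_row A * dim_row B) (dim_col A * dim_col B)"
  by (simp add: kron_def)

lemma kron_index: "i < dim_row A * dim_row B \<Longrightarrow> k < dim_col A * dim_col B \<Longrightarrow>
  kron A B $$ (i, k) = A $$ (i div dim_row B, k div dim_col B) * B $$ (i mod dim_row B, k mod dim_col B)"
  by (simp add: kron_def)

lemma outer_ket_index: "x < 2 ^ length w \<Longrightarrow> y < 2 ^ length w \<Longrightarrow>
  outer (ket w) (ket w) $$ (x, y) = (if x = idx w \<and> y = idx w then 1 else 0)"
  by (simp add: outer_def ket_index)

lemma outer_ket_carrier: "outer (ket w) (ket w) \<in> carrier_mat (2 ^ length w) (2 ^ length w)"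
  by (simp add: outer_def)

lemma CC1_carrier: "R \<in> carrier_mat 2 2 \<Longrightarrow> CC1 w R \<in> carrier_mat (2 * 2 ^ length w) (2 * 2 ^ length w)"
  by (simp add: CC1_def kron_def outer_def)

lemma CC1_index:
  assumes R: "R \<in> carrier_mat 2 2" and a: "a < 2 * 2 ^ length w" and b: "b < 2 * 2 ^ length w"
  shows "CC1 w R $$ (a, b) = (if a mod 2 ^ length w = idx w then
      (if b mod 2 ^ length w = idx w then R $$ (a div 2 ^ length w, b div 2 ^ length w) else 0)
      else (if a = b then 1 else 0))"
proof -
  let ?K = "2 ^ length w :: nat"
  have K: "?K > 0" by simp
  have ad: "a div ?K < 2" "b div ?K < 2" using a b by (simp_all add: less_mult_imp_div_less)
  have am: "a mod ?K < ?K" "b mod ?K < ?K" by simp_all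
  have e: "CC1 w R $$ (a, b) = R $$ (a div ?K, b div ?K) * outer (ket w) (ket w) $$ (a mod ?K, b mod ?K)
     + 1\<^sub>m 2 $$ (a div ?K, b div ?K) * (1\<^sub>m ?K - outer (ket w) (ket w)) $$ (a mod ?K, b mod ?K)"
    unfolding CC1_def using R a b
    by (simp add: kron_def outer_def)
  have ab: "a = b \<longleftrightarrow> a div ?K = b div ?K \<and> a mod ?K = b mod ?K"
    by (metis div_mult_mod_eq)
  have o: "outer (ket w) (ket w) $$ (a mod ?K, b mod ?K) = (if a mod ?K = idx w \<and> b mod ?K = idx w then 1 else 0)"
    using am by (simp add: outer_ket_index)
  have mi: "(1\<^sub>m ?K - outer (ket w) (ket w)) $$ (a mod ?K, b mod ?K) = 1\<^sub>m ?K $$ (a mod ?K, b mod ?K) - outer (ket w) (ket w) $$ (a mod ?K, b mod ?K)"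
    using am by (simp add: outer_def)
  show ?thesis unfolding e mi o using ad am ab
    by auto
qed

lemma triple:
  assumes K: "(K::nat) > 0" and q: "q < 2" and l: "l < K"
  shows "(k = h * (2 * K) + q * K + l) \<longleftrightarrow> (k div (2 * K) = h \<and> k div K mod 2 = q \<and> k mod K = l)"
proof
  assume k: "k = h * (2 * K) + q * K + l"
  have "k = (2 * h + q) * K + l" using k by (simp add: algebra_simps)
  then have d: "k div K = 2 * h + q" and m: "k mod K = l" using l by simp_all
  have "k div (2 * K) = k div K div 2" by (simp add: div_mult2_eq mult.commute)
  then show "k div (2 * K) = h \<and> k div K mod 2 = q \<and> k mod K = l" using d m q by simp
next
  assume a: "k div (2 * K) = h \<and> k div K mod 2 = q \<and> k mod K = l"
  have "k div (2 * K) = k div K div 2" by (simp add: div_mult2_eq mult.commute)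
  then have "k div K = 2 * h + q" using a div_mult_mod_eq[of "k div K" 2] by simp
  then show "k = h * (2 * K) + q * K + l" using a div_mult_mod_eq[of k K] by (simp add: algebra_simps)
qed

lemma mod2K_div: assumes "(K::nat) > 0" shows "(i mod (2 * K)) div K = i div K mod 2"
proof -
  have "i mod (2 * K) = K * (i div K mod 2) + i mod K" using mod_mult2_eq[of i K 2] by (simp add: mult.commute)
  then show ?thesis using assms by simp
qed

lemma mod2K_mod: "(i::nat) mod (2 * K) mod K = i mod K"
  by (simp add: mod_mod_cancel)

lemma aux1:
  fixes R :: "complex mat"
  assumes "k = a0 \<longleftrightarrow> hk = h \<and> qk = 0 \<and> lk = l" "k = a1 \<longleftrightarrow> hk = h \<and> qk = (1::nat) \<and> lk = (l::nat)"
    "qk = 0 \<or> qk = 1"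
  shows "(if h = hk then 1 else 0) * (if lk = l then R $$ (q, qk) else 0)
     = (if k = a0 then R $$ (q, 0) else 0) + (if k = a1 then R $$ (q, 1) else 0)"
  using assms by auto

lemma G_action:
  assumes R: "R \<in> carrier_mat 2 2" and u: "u \<in> carrier_vec (H * (2 * 2 ^ length w))"
    and i: "i < H * (2 * 2 ^ length w)"
  shows "kron (1\<^sub>m H) (CC1 w R) \<in> carrier_mat (H * (2 * 2 ^ length w)) (H * (2 * 2 ^ length w))"
    and "(kron (1\<^sub>m H) (CC1 w R) *\<^sub>v u) $ i =
      (if i mod 2 ^ length w = idx w then
          R $$ (i div 2 ^ length w mod 2, 0) * u $ (i div (2 * 2 ^ length w) * (2 * 2 ^ length w) + i mod 2 ^ length w)
        + R $$ (i div 2 ^ length w mod 2, 1) * u $ (i div (2 * 2 ^ length w) * (2 * 2 ^ length w) + 2 ^ length w + i mod 2 ^ length w)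
       else u $ i)"
proof -
  let ?K = "2 ^ length w :: nat"
  let ?N = "H * (2 * ?K)"
  let ?G = "kron (1\<^sub>m H) (CC1 w R)"
  let ?h = "i div (2 * ?K)" and ?q = "i div ?K mod 2" and ?l = "i mod ?K"
  let ?a0 = "?h * (2 * ?K) + ?l" and ?a1 = "?h * (2 * ?K) + ?K + ?l"
  have K: "?K > 0" by simp
  have CC: "CC1 w R \<in> carrier_mat (2 * ?K) (2 * ?K)" using CC1_carrier[OF R] .
  show G: "?G \<in> carrier_mat ?N ?N" using kron_carrier[of "1\<^sub>m H" "CC1 w R"] CC by simp
  have hH: "?h < H" using i by (simp add: less_mult_imp_div_less)
  have a1N: "?a1 < ?N"
  proof -
    have "?a1 < ?h * (2 * ?K) + 2 * ?K" by simp
    also have "\<dots> = (?h + 1) * (2 * ?K)" by (simp add: algebra_simps)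
    also have "\<dots> \<le> H * (2 * ?K)" using hH by (intro mult_right_mono) auto
    finally show ?thesis .
  qed
  have a0N: "?a0 < ?N" using a1N by simp
  have q2: "?q < 2" by simp
  have ent: "?G $$ (i, k) = (if ?l = idx w then (if k = ?a0 then R $$ (?q, 0) else 0)
        + (if k = ?a1 then R $$ (?q, 1) else 0) else (if k = i then 1 else 0))" if k: "k < ?N" for k
  proof -
    have hk: "k div (2 * ?K) < H" using k by (simp add: less_mult_imp_div_less)
    have "?G $$ (i, k) = 1\<^sub>m H $$ (?h, k div (2 * ?K)) * CC1 w R $$ (i mod (2 * ?K), k mod (2 * ?K))"
      using kron_index[of i "1\<^sub>m H" "CC1 w R" k] CC i k by simp
    also have "\<dots> = (if ?h = k div (2 * ?K) then 1 else 0) *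
       (if ?l = idx w then (if k mod ?K = idx w then R $$ (?q, k div ?K mod 2) else 0)
        else (if i mod (2 * ?K) = k mod (2 * ?K) then 1 else 0))"
    proof -
      have e1: "1\<^sub>m H $$ (?h, k div (2 * ?K)) = (if ?h = k div (2 * ?K) then 1 else 0)"
        using hH hk by simp
      have "CC1 w R $$ (i mod (2 * ?K), k mod (2 * ?K)) = (if i mod (2 * ?K) mod ?K = idx w then
        (if k mod (2 * ?K) mod ?K = idx w then R $$ (i mod (2 * ?K) div ?K, k mod (2 * ?K) div ?K) else 0)
        else (if i mod (2 * ?K) = k mod (2 * ?K) then 1 else 0))"
        by (rule CC1_index[OF R]) simp_all
      then have e2: "CC1 w R $$ (i mod (2 * ?K), k mod (2 * ?K)) = (if ?l = idx w then
        (if k mod ?K = idx w then R $$ (?q, k div ?K mod 2) else 0)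
        else (if i mod (2 * ?K) = k mod (2 * ?K) then 1 else 0))"
        by (simp only: mod2K_div[OF K] mod2K_mod)
      show ?thesis by (simp only: e1 e2)
    qed
    also have "\<dots> = (if ?l = idx w then (if k = ?a0 then R $$ (?q, 0) else 0)
        + (if k = ?a1 then R $$ (?q, 1) else 0) else (if k = i then 1 else 0))"
    proof -
      have t0: "k = ?a0 \<longleftrightarrow> (k div (2 * ?K) = ?h \<and> k div ?K mod 2 = 0 \<and> k mod ?K = ?l)"
        using triple[OF K, of 0 ?l k ?h] by simp
      have t1: "k = ?a1 \<longleftrightarrow> (k div (2 * ?K) = ?h \<and> k div ?K mod 2 = 1 \<and> k mod ?K = ?l)"
        using triple[OF K, of 1 ?l k ?h] by simp
      have ki: "k = i \<longleftrightarrow> (?h = k div (2 * ?K) \<and> i mod (2 * ?K) = k mod (2 * ?K))"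
        by (metis div_mult_mod_eq)
      have k2: "k div ?K mod 2 = 0 \<or> k div ?K mod 2 = 1" by arith
      show ?thesis
      proof (cases "?l = idx w")
        case True
        show ?thesis unfolding if_P[OF True] unfolding True[symmetric]
          by (rule aux1[OF t0 t1 k2])
      next
        case False
        show ?thesis unfolding if_not_P[OF False] using ki by auto
      qed
    qed
    finally show ?thesis .
  qed
  have "(?G *\<^sub>v u) $ i = (\<Sum>k\<in>{0..<?N}. ?G $$ (i, k) * u $ k)"
    using G u i by (simp add: scalar_prod_def)
  also have "\<dots> = (\<Sum>k\<in>{0..<?N}. (if ?l = idx w then (if k = ?a0 then R $$ (?q, 0) * u $ k else 0)
        + (if k = ?a1 then R $$ (?q, 1) * u $ k else 0) else (if k = i then u $ k else 0)))"
    by (intro sum.cong refl) (simp add: ent)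
  also have "\<dots> = (if ?l = idx w then R $$ (?q, 0) * u $ ?a0 + R $$ (?q, 1) * u $ ?a1 else u $ i)"
  proof (cases "?l = idx w")
    case True
    then show ?thesis using a0N a1N by (simp add: sum.distrib)
  next
    case False
    then show ?thesis using i by simp
  qed
  finally show "(?G *\<^sub>v u) $ i = (if ?l = idx w then R $$ (?q, 0) * u $ ?a0 + R $$ (?q, 1) * u $ ?a1 else u $ i)" .
qed



lemma foldr_mat:
  fixes u :: "complex vec"
  assumes G: "\<forall>w\<in>set L. G w \<in> carrier_mat N N" and u: "u \<in> carrier_vec N"
  shows "foldr (\<lambda>w M. G w * M) L (1\<^sub>m N) \<in> carrier_mat N N \<and>
         foldr (\<lambda>w M. G w * M) L (1\<^sub>m N) *\<^sub>v u = foldr (\<lambda>w v. G w *\<^sub>v v) L u"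
  using G
proof (induction L)
  case Nil then show ?case using u by simp
next
  case (Cons a L)
  let ?M = "foldr (\<lambda>w M. G w * M) L (1\<^sub>m N)"
  have M: "?M \<in> carrier_mat N N" and e: "?M *\<^sub>v u = foldr (\<lambda>w v. G w *\<^sub>v v) L u" using Cons by auto
  have Ga: "G a \<in> carrier_mat N N" using Cons.prems by simp
  have "(G a * ?M) *\<^sub>v u = G a *\<^sub>v (?M *\<^sub>v u)" using assoc_mult_mat_vec[OF Ga M u] .
  then show ?case using Ga M e by simp
qed

lemma Rot_carrier: "Rot x \<in> carrier_mat 2 2" by (simp add: Rot_def)

lemma a_mod:
  assumes "(K::nat) > 0" "l < K"
  shows "(h * (2 * K) + l) mod K = l" "(h * (2 * K) + K + l) mod K = l"
  using triple[OF assms(1) _ assms(2), of 0 "h * (2 * K) + l" h] triple[OF assms(1) _ assms(2), of 1 "h * (2 * K) + K + l" h]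
  by simp_all

lemma G_carrier: "R \<in> carrier_mat 2 2 \<Longrightarrow>
  kron (1\<^sub>m H) (CC1 w R) \<in> carrier_mat (H * (2 * 2 ^ length w)) (H * (2 * 2 ^ length w))"
  using kron_carrier[of "1\<^sub>m H" "CC1 w R"] CC1_carrier[of R w] by simp

lemma fold_action:
  fixes \<rho> :: "real \<Rightarrow> real"
  assumes L: "distinct L" "\<forall>w\<in>set L. length w = m"
    and u: "u \<in> carrier_vec (H * (2 * 2 ^ m))"
  shows "foldr (\<lambda>w v. kron (1\<^sub>m H) (CC1 w (Rot (theta \<rho> w))) *\<^sub>v v) L u \<in> carrier_vec (H * (2 * 2 ^ m)) \<and>
    (\<forall>i < H * (2 * 2 ^ m). foldr (\<lambda>w v. kron (1\<^sub>m H) (CC1 w (Rot (theta \<rho> w))) *\<^sub>v v) L u $ i =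
      (if bits m (i mod 2 ^ m) \<in> set L then
          Rot (theta \<rho> (bits m (i mod 2 ^ m))) $$ (i div 2 ^ m mod 2, 0) * u $ (i div (2 * 2 ^ m) * (2 * 2 ^ m) + i mod 2 ^ m)
        + Rot (theta \<rho> (bits m (i mod 2 ^ m))) $$ (i div 2 ^ m mod 2, 1) * u $ (i div (2 * 2 ^ m) * (2 * 2 ^ m) + 2 ^ m + i mod 2 ^ m)
       else u $ i))"
  using L
proof (induction L)
  case Nil then show ?case using u by simp
next
  case (Cons w L)
  let ?K = "2 ^ m :: nat"
  let ?N = "H * (2 * ?K)"
  let ?V = "foldr (\<lambda>w v. kron (1\<^sub>m H) (CC1 w (Rot (theta \<rho> w))) *\<^sub>v v) L u"
  have lw: "length w = m" using Cons.prems by simp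
  have wL: "w \<notin> set L" using Cons.prems by simp
  have pL: "distinct L" "\<forall>w\<in>set L. length w = m" using Cons.prems by simp_all
  note IH0 = Cons.IH[OF pL]
  note IH = IH0[THEN conjunct1] IH0[THEN conjunct2, rule_format]
  note ga = G_action[OF Rot_carrier, where H=H and w=w and u="?V", unfolded lw, OF IH(1)]
  have car: "kron (1\<^sub>m H) (CC1 w (Rot (theta \<rho> w))) *\<^sub>v ?V \<in> carrier_vec ?N"
    using mult_mat_vec_carrier[OF G_carrier[OF Rot_carrier, of H w "theta \<rho> w", unfolded lw] IH(1)] .
  have K: "?K > 0" by simp
  show ?case
  proof (intro conjI allI impI)
    show "foldr (\<lambda>w v. kron (1\<^sub>m H) (CC1 w (Rot (theta \<rho> w))) *\<^sub>v v) (w # L) u \<in> carrier_vec ?N"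
      using car by simp
    fix i assume i: "i < ?N"
    let ?h = "i div (2 * ?K)" and ?q = "i div ?K mod 2" and ?l = "i mod ?K"
    let ?a0 = "?h * (2 * ?K) + ?l" and ?a1 = "?h * (2 * ?K) + ?K + ?l"
    have hH: "?h < H" using i by (simp add: less_mult_imp_div_less)
    have a1N: "?a1 < ?N"
    proof -
      have "?a1 < ?h * (2 * ?K) + 2 * ?K" by simp
      also have "\<dots> = (?h + 1) * (2 * ?K)" by (simp add: algebra_simps)
      also have "\<dots> \<le> H * (2 * ?K)" using hH by (intro mult_right_mono) auto
      finally show ?thesis .
    qed
    have a0N: "?a0 < ?N" using a1N by simp
    have lK: "?l < ?K" by simp
    have bl: "idx (bits m ?l) = ?l" using idx_bits[OF lK] .
    have e: "foldr (\<lambda>w v. kron (1\<^sub>m H) (CC1 w (Rot (theta \<rho> w))) *\<^sub>v v) (w # L) u $ i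
       = (if ?l = idx w then Rot (theta \<rho> w) $$ (?q, 0) * ?V $ ?a0 + Rot (theta \<rho> w) $$ (?q, 1) * ?V $ ?a1
          else ?V $ i)"
      using ga(2)[OF i] by simp
    show "foldr (\<lambda>w v. kron (1\<^sub>m H) (CC1 w (Rot (theta \<rho> w))) *\<^sub>v v) (w # L) u $ i =
      (if bits m ?l \<in> set (w # L) then
          Rot (theta \<rho> (bits m ?l)) $$ (?q, 0) * u $ ?a0 + Rot (theta \<rho> (bits m ?l)) $$ (?q, 1) * u $ ?a1
       else u $ i)"
    proof (cases "?l = idx w")
      case True
      have bw: "bits m ?l = w" using True bits_idx[of w] lw by simp
      have m0: "?a0 mod ?K = ?l" and m1: "?a1 mod ?K = ?l" using a_mod[OF K lK] by simp_all
      have v0: "?V $ ?a0 = u $ ?a0" using IH(2)[OF a0N] m0 bw wL by simp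
      have v1: "?V $ ?a1 = u $ ?a1" using IH(2)[OF a1N] m1 bw wL by simp
      show ?thesis unfolding e using True bw v0 v1 by simp
    next
      case False
      have bw: "bits m ?l \<noteq> w" using False bl by auto
      show ?thesis unfolding e using False bw IH(2)[OF i] by simp
    qed
  qed
qed



lemma CC1_Nil: assumes R: "R \<in> carrier_mat 2 2" shows "CC1 [] R = R"
proof (rule eq_matI)
  show "dim_row (CC1 [] R) = dim_row R" "dim_col (CC1 [] R) = dim_col R"
    using CC1_carrier[OF R, of "[]"] R by auto
  fix i j assume "i < dim_row R" "j < dim_col R"
  then have ij: "i < 2" "j < 2" using R by auto
  show "CC1 [] R $$ (i, j) = R $$ (i, j)"
    using CC1_index[OF R, where w="[]" and a=i and b=j] ij by simp
qed

lemma pow_split: "j \<le> n \<Longrightarrow> (2::nat) ^ (n - j) * 2 ^ j = 2 ^ n"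
  by (simp add: power_add[symmetric])

lemma Ugate_action:
  fixes \<rho> :: "real \<Rightarrow> real"
  assumes j: "Suc m \<le> n" and u: "u \<in> carrier_vec (2 ^ n)" and i: "i < 2 ^ n"
  shows "Ugate \<rho> n (Suc m) \<in> carrier_mat (2 ^ n) (2 ^ n) \<and>
    (Ugate \<rho> n (Suc m) *\<^sub>v u) $ i =
          Rot (theta \<rho> (bits m (i mod 2 ^ m))) $$ (i div 2 ^ m mod 2, 0) * u $ (i div (2 * 2 ^ m) * (2 * 2 ^ m) + i mod 2 ^ m)
        + Rot (theta \<rho> (bits m (i mod 2 ^ m))) $$ (i div 2 ^ m mod 2, 1) * u $ (i div (2 * 2 ^ m) * (2 * 2 ^ m) + 2 ^ m + i mod 2 ^ m)"
proof -
  let ?H = "2 ^ (n - Suc m) :: nat"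
  have hN: "?H * (2 * 2 ^ m) = 2 ^ n" using pow_split[OF j] by simp
  show ?thesis
  proof (cases m)
    case 0
    have n1: "(2::nat) ^ (n - 1) * 2 = 2 ^ n" using hN 0 by simp
    have U: "Ugate \<rho> n (Suc m) = kron (1\<^sub>m ?H) (CC1 [] (Rot (theta \<rho> [])))"
      using 0 by (simp add: Ugate_def CC1_Nil[OF Rot_carrier])
    note ga = G_action[OF Rot_carrier, where H="?H" and w="[]" and u=u and i=i]
    have u': "u \<in> carrier_vec (?H * (2 * 2 ^ length ([]::bool list)))" using u n1 0 by simp
    have i': "i < ?H * (2 * 2 ^ length ([]::bool list))" using i n1 0 by simp
    show ?thesis using ga(1)[OF u' i'] ga(2)[OF u' i'] 0 n1 unfolding U by simp
  next
    case (Suc m')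
    let ?G = "\<lambda>w. kron (1\<^sub>m ?H) (CC1 w (Rot (theta \<rho> w)))"
    let ?L = "List.n_lists m [False, True]"
    have U: "Ugate \<rho> n (Suc m) = foldr (\<lambda>w M. ?G w * M) ?L (1\<^sub>m (2 ^ n))"
      using Suc by (simp add: Ugate_def)
    have Gc: "\<forall>w\<in>set ?L. ?G w \<in> carrier_mat (2 ^ n) (2 ^ n)"
    proof
      fix w assume "w \<in> set ?L"
      then have lw: "length w = m" by (rule length_n_lists_elem)
      show "?G w \<in> carrier_mat (2 ^ n) (2 ^ n)"
        using G_carrier[OF Rot_carrier, of ?H w "theta \<rho> w"] lw hN by simp
    qed
    note fm = foldr_mat[OF Gc u]
    have dL: "distinct ?L" by (rule distinct_n_lists) simp
    have lL: "\<forall>w\<in>set ?L. length w = m" by (simp add: set_n_lists)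
    have u': "u \<in> carrier_vec (?H * (2 * 2 ^ m))" using u hN by simp
    note fa = fold_action[OF dL lL u', where \<rho>=\<rho>]
    have i': "i < ?H * (2 * 2 ^ m)" using i hN by simp
    have inL: "bits m (i mod 2 ^ m) \<in> set ?L" by (auto simp: set_n_lists)
    show ?thesis unfolding U using fm fa[THEN conjunct2, rule_format, OF i'] inL by simp
  qed
qed



lemma idx_replicate[simp]: "idx (replicate k False) = 0"
  by (induction k) auto

lemma Rot_col0: "q < 2 \<Longrightarrow> Rot x $$ (q, 0) = complex_of_real (T (q = 1) x)"
  by (cases "q = 0") (auto simp: Rot_def T_def)

lemma amp_Nil: "amp \<rho> [] = 1" by (simp add: amp_def)

lemma psi_inv: "j \<le> n \<Longrightarrow> psi \<rho> n j = vec (2 ^ n) (\<lambda>i. if i < 2 ^ j then complex_of_real (amp \<rho> (bits j i)) else 0)"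
proof (induction j)
  case 0
  show ?case
  proof (rule eq_vecI)
    show "dim_vec (psi \<rho> n 0) = dim_vec (vec (2 ^ n) (\<lambda>i. if i < 2 ^ 0 then complex_of_real (amp \<rho> (bits 0 i)) else 0))"
      by simp
    fix i assume "i < dim_vec (vec (2 ^ n) (\<lambda>i. if i < 2 ^ 0 then complex_of_real (amp \<rho> (bits 0 i)) else 0))"
    then have i: "i < 2 ^ n" by simp
    show "psi \<rho> n 0 $ i = vec (2 ^ n) (\<lambda>i. if i < 2 ^ 0 then complex_of_real (amp \<rho> (bits 0 i)) else 0) $ i"
      using i ket_index[of i "replicate n False"] by (simp add: amp_Nil)
  qed
next
  case (Suc j)
  let ?v = "psi \<rho> n j"
  let ?K = "2 ^ j :: nat"
  have jn: "Suc j \<le> n" using Suc.prems .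
  have v: "?v = vec (2 ^ n) (\<lambda>i. if i < 2 ^ j then complex_of_real (amp \<rho> (bits j i)) else 0)"
    using Suc by simp
  have vc: "?v \<in> carrier_vec (2 ^ n)" unfolding v by simp
  show ?case
  proof (rule eq_vecI)
    have "Ugate \<rho> n (Suc j) \<in> carrier_mat (2 ^ n) (2 ^ n)"
      using Ugate_action[OF jn vc, of 0, where \<rho>=\<rho>] by simp
    then show "dim_vec (psi \<rho> n (Suc j)) = dim_vec (vec (2 ^ n) (\<lambda>i. if i < 2 ^ Suc j then complex_of_real (amp \<rho> (bits (Suc j) i)) else 0))"
      by simp
    fix i assume "i < dim_vec (vec (2 ^ n) (\<lambda>i. if i < 2 ^ Suc j then complex_of_real (amp \<rho> (bits (Suc j) i)) else 0))"
    then have i: "i < 2 ^ n" by simp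
    let ?h = "i div (2 * ?K)" and ?q = "i div ?K mod 2" and ?l = "i mod ?K"
    let ?a0 = "?h * (2 * ?K) + ?l" and ?a1 = "?h * (2 * ?K) + ?K + ?l"
    have hH: "?h < 2 ^ (n - Suc j)"
      using i pow_split[OF jn] by (simp add: less_mult_imp_div_less)
    have a1N: "?a1 < 2 ^ n"
    proof -
      have "?a1 < ?h * (2 * ?K) + 2 * ?K" by simp
      also have "\<dots> = (?h + 1) * (2 * ?K)" by (simp add: algebra_simps)
      also have "\<dots> \<le> 2 ^ (n - Suc j) * (2 * ?K)" using hH by (intro mult_right_mono) auto
      also have "\<dots> = 2 ^ n" using pow_split[OF jn] by simp
      finally show ?thesis .
    qed
    have a0N: "?a0 < 2 ^ n" using a1N by simp
    have lK: "?l < ?K" by simp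
    have q2: "?q < 2" by simp
    have va1: "?v $ ?a1 = 0" unfolding v using a1N by simp
    have va0: "?v $ ?a0 = (if ?h = 0 then complex_of_real (amp \<rho> (bits j ?l)) else 0)"
    proof (cases "?h = 0")
      case True then show ?thesis unfolding v using a0N lK by simp
    next
      case False
      then have "?a0 \<ge> 2 * ?K" by (simp add: add_increasing2)
      then show ?thesis unfolding v using a0N False by simp
    qed
    have "psi \<rho> n (Suc j) $ i = (Ugate \<rho> n (Suc j) *\<^sub>v ?v) $ i" by simp
    also have "\<dots> = Rot (theta \<rho> (bits j ?l)) $$ (?q, 0) * ?v $ ?a0 + Rot (theta \<rho> (bits j ?l)) $$ (?q, 1) * ?v $ ?a1"
      using Ugate_action[OF jn vc i, where \<rho>=\<rho>] by simp
    also have "\<dots> = (if ?h = 0 then complex_of_real (T (?q = 1) (theta \<rho> (bits j ?l)) * amp \<rho> (bits j ?l)) else 0)"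
      unfolding va0 va1 Rot_col0[OF q2] by simp
    also have "\<dots> = (if i < 2 ^ Suc j then complex_of_real (amp \<rho> (bits (Suc j) i)) else 0)"
    proof -
      have "?h = 0 \<longleftrightarrow> i < 2 ^ Suc j" by (simp add: div_eq_0_iff)
      then show ?thesis by (simp add: amp_Cons)
    qed
    finally show "psi \<rho> n (Suc j) $ i = vec (2 ^ n) (\<lambda>i. if i < 2 ^ Suc j then complex_of_real (amp \<rho> (bits (Suc j) i)) else 0) $ i"
      using i by simp
  qed
qed



lemma vec_sum_eq: "vec_sum (2 ^ j) (\<lambda>w. complex_of_real (amp \<rho> w) \<cdot>\<^sub>v ket w) {w. length w = j}
   = vec (2 ^ j) (\<lambda>i. complex_of_real (amp \<rho> (bits j i)))"
proof (rule eq_vecI)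
  show "dim_vec (vec_sum (2 ^ j) (\<lambda>w. complex_of_real (amp \<rho> w) \<cdot>\<^sub>v ket w) {w. length w = j}) = dim_vec (vec (2 ^ j) (\<lambda>i. complex_of_real (amp \<rho> (bits j i))))"
    by (simp add: vec_sum_def)
  fix i assume "i < dim_vec (vec (2 ^ j) (\<lambda>i. complex_of_real (amp \<rho> (bits j i))))"
  then have i: "i < 2 ^ j" by simp
  have fin: "finite {w :: bool list. length w = j}"
    using finite_lists_length_eq[of "UNIV :: bool set" j] by simp
  have "(\<Sum>w\<in>{w. length w = j}. (complex_of_real (amp \<rho> w) \<cdot>\<^sub>v ket w) $ i)
      = (\<Sum>w\<in>{w. length w = j}. if w = bits j i then complex_of_real (amp \<rho> w) else 0)"
  proof (intro sum.cong refl)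
    fix w assume "w \<in> {w :: bool list. length w = j}"
    then have lw: "length w = j" by simp
    have "i = idx w \<longleftrightarrow> w = bits j i" using bits_idx[of w] idx_bits[OF i] lw by auto
    then show "(complex_of_real (amp \<rho> w) \<cdot>\<^sub>v ket w) $ i = (if w = bits j i then complex_of_real (amp \<rho> w) else 0)"
      using i lw ket_index[of i w] by simp
  qed
  also have "\<dots> = complex_of_real (amp \<rho> (bits j i))"
    using fin by (simp add: sum.delta')
  finally show "vec_sum (2 ^ j) (\<lambda>w. complex_of_real (amp \<rho> w) \<cdot>\<^sub>v ket w) {w. length w = j} $ i = vec (2 ^ j) (\<lambda>i. complex_of_real (amp \<rho> (bits j i))) $ i"
    using i by (simp add: vec_sum_def)
qed

lemma kron_rep: "kron_vec (ket (replicate k False)) (vec (2 ^ j) f) = vec (2 ^ k * 2 ^ j) (\<lambda>i. if i < 2 ^ j then f i else 0)"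
proof (rule eq_vecI)
  show "dim_vec (kron_vec (ket (replicate k False)) (vec (2 ^ j) f)) = dim_vec (vec (2 ^ k * 2 ^ j) (\<lambda>i. if i < 2 ^ j then f i else 0))"
    by (simp add: kron_vec_def)
  fix i assume "i < dim_vec (vec (2 ^ k * 2 ^ j) (\<lambda>i. if i < 2 ^ j then f i else 0))"
  then have i: "i < 2 ^ k * 2 ^ j" by simp
  have d: "i div 2 ^ j < 2 ^ k" using i by (simp add: less_mult_imp_div_less)
  have "kron_vec (ket (replicate k False)) (vec (2 ^ j) f) $ i = ket (replicate k False) $ (i div 2 ^ j) * f (i mod 2 ^ j)"
    using i by (simp add: kron_vec_def)
  also have "\<dots> = (if i < 2 ^ j then f i else 0)"
    using ket_index[of "i div 2 ^ j" "replicate k False"] d by (simp add: div_eq_0_iff)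
  finally show "kron_vec (ket (replicate k False)) (vec (2 ^ j) f) $ i = vec (2 ^ k * 2 ^ j) (\<lambda>i. if i < 2 ^ j then f i else 0) $ i"
    using i by simp
qed

theorem lemma3p2:
  fixes n :: nat and \<rho> :: "real \<Rightarrow> real"
  assumes "n \<ge> 1"
    and "\<forall>x\<in>{0..1}. \<rho> x \<ge> 0"
    and "\<rho> integrable_on {0..1}"
    and "integral {0..1} \<rho> = 1"
  shows "(\<forall>j\<in>{1..n}. psi \<rho> n j =
            kron_vec (ket (replicate (n - j) False))
              (vec_sum (2 ^ j) (\<lambda>w. complex_of_real (amp \<rho> w) \<cdot>\<^sub>v ket w)
                 {w. length w = j}))
       \<and> psi \<rho> n n = vec_sum (2 ^ n) (\<lambda>z. complex_of_real (amp \<rho> z) \<cdot>\<^sub>v ket z)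
                 {z. length z = n}"
proof
  show "\<forall>j\<in>{1..n}. psi \<rho> n j =
            kron_vec (ket (replicate (n - j) False))
              (vec_sum (2 ^ j) (\<lambda>w. complex_of_real (amp \<rho> w) \<cdot>\<^sub>v ket w)
                 {w. length w = j})"
  proof
    fix j assume "j \<in> {1..n}"
    then have jn: "j \<le> n" by simp
    show "psi \<rho> n j = kron_vec (ket (replicate (n - j) False))
              (vec_sum (2 ^ j) (\<lambda>w. complex_of_real (amp \<rho> w) \<cdot>\<^sub>v ket w) {w. length w = j})"
      unfolding vec_sum_eq kron_rep psi_inv[OF jn] pow_split[OF jn] by simp
  qed
  have "psi \<rho> n n = vec (2 ^ n) (\<lambda>i. complex_of_real (amp \<rho> (bits n i)))"
    unfolding psi_inv[OF order_refl] by (rule eq_vecI) auto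
  then show "psi \<rho> n n = vec_sum (2 ^ n) (\<lambda>z. complex_of_real (amp \<rho> z) \<cdot>\<^sub>v ket z) {z. length z = n}"
    unfolding vec_sum_eq .
qed

end
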